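(* Let $\mathcal P$ be a 2-reflex orthostack made of three bricks with canonical contact rectangles and signature $\sqcap_i\sqcap_j$ (for some types $i,j\in\{1,2,3,4\}$) with $j\neq 4$. Then $\mathcal P$ is guarded by a single vertical closed face guard.
   Context: A 2-reflex orthostack is an orthogonal polyhedron with no reflex edge parallel to the vertical ($z$) axis all of whose horizontal cross-sections are simply connected; it is a stack of bricks $B_t=R_t\times[z_{t-1},z_t]$, $t=1,\dots,k$ (bottom to top), $z_0<\dots<z_k$, each $R_t$ an axis-parallel rectangle, $R_t\ne R_{t+1}$. The contact rectangle between $B_t$ and $B_{t+1}$ is $(R_t\cap R_{t+1})\times\{z_t\}$; it is canonical if one of $R_t,R_{t+1}$ is strictly contained in the other and their set difference is connected (so exactly one horizontal face of the orthostack lies in the plane $z=z_t$). The type of a canonical contact rectangle is the number $i\in\{1,2,3,4\}$ of sides of the smaller of the two rectangles that are not contained in the boundary of the larger one (equivalently, the number of edges of the orthostack on its perimeter). The contact is denoted $\sqcup_i$ if $R_t\subsetneq R_{t+1}$ (lower brick's vertical projection inside the upper one's) and $\sqcap_i$ if $R_{t+1}\subsetneq R_t$. The signature is the sequence of these symbols for $t=1,\dots,k-1$, read from bottom to top. A point $x$ is visible to $y$ if the segment $xy$ does not meet the exterior of the polyhedron; a closed face guard is a face including its boundary; it guards the polyhedron if every point is visible from some point of it. A face is vertical if it is parallel to the $z$-axis, horizontal if orthogonal to it. *)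

theory Defs
  imports "HOL-Analysis.Analysis"
begin

definition rect :: "real \<Rightarrow> real \<Rightarrow> real \<Rightarrow> real \<Rightarrow> (real \<times> real) set" where
  "rect a b c d = {a..b} \<times> {c..d}"

definition rect_sides :: "real \<Rightarrow> real \<Rightarrow> real \<Rightarrow> real \<Rightarrow> (real \<times> real) set set" where
  "rect_sides a b c d = {{a} \<times> {c..d}, {b} \<times> {c..d}, {a..b} \<times> {c}, {a..b} \<times> {d}}"

text \<open>Brick R x [z0,z1] in real^3 (third coordinate is the vertical axis).\<close>
definition brick :: "(real \<times> real) set \<Rightarrow> real \<Rightarrow> real \<Rightarrow> (real^3) set" where
  "brick R z0 z1 = {p. (p$1, p$2) \<in> R \<and> z0 \<le> p$3 \<and> p$3 \<le> z1}"

definition orthostack ::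
  "nat \<Rightarrow> (nat \<Rightarrow> real) \<Rightarrow> (nat \<Rightarrow> real) \<Rightarrow> (nat \<Rightarrow> real) \<Rightarrow> (nat \<Rightarrow> real)
   \<Rightarrow> (nat \<Rightarrow> real) \<Rightarrow> (real^3) set" where
  "orthostack k x1 x2 y1 y2 z =
     (\<Union>t\<in>{1..k}. brick (rect (x1 t) (x2 t) (y1 t) (y2 t)) (z (t - 1)) (z t))"

definition canonical_contact :: "(real \<times> real) set \<Rightarrow> (real \<times> real) set \<Rightarrow> bool" where
  "canonical_contact L S \<longleftrightarrow> S \<subset> L \<and> connected (L - S)"

definition contact_type ::
  "real \<Rightarrow> real \<Rightarrow> real \<Rightarrow> real \<Rightarrow> (real \<times> real) set \<Rightarrow> nat" where
  "contact_type a b c d L = card {s \<in> rect_sides a b c d. \<not> s \<subseteq> frontier L}"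

text \<open>Points in the relative interior of a face lying in the plane a.x = b, with the
  polyhedron locally on the side a.x <= b.\<close>
definition face_points :: "(real^3) set \<Rightarrow> real^3 \<Rightarrow> real \<Rightarrow> (real^3) set" where
  "face_points P a b =
     {p. a \<bullet> p = b \<and> (\<exists>e>0. ball p e \<inter> P = ball p e \<inter> {x. a \<bullet> x \<le> b})}"

definition closed_face :: "(real^3) set \<Rightarrow> (real^3) set \<Rightarrow> bool" where
  "closed_face P F \<longleftrightarrow>
     (\<exists>a b. a \<noteq> 0 \<and> (\<exists>C\<in>components (face_points P a b). F = closure C))"

definition vertical_closed_face :: "(real^3) set \<Rightarrow> (real^3) set \<Rightarrow> bool" where
  "vertical_closed_face P F \<longleftrightarrow>
     (\<exists>a b. a \<noteq> 0 \<and> a$3 = 0 \<and> (\<exists>C\<in>components (face_points P a b). F = closure C))"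

definition visible :: "(real^3) set \<Rightarrow> real^3 \<Rightarrow> real^3 \<Rightarrow> bool" where
  "visible P x y \<longleftrightarrow> closed_segment x y \<subseteq> P"

definition guards :: "(real^3) set \<Rightarrow> (real^3) set \<Rightarrow> bool" where
  "guards P G \<longleftrightarrow> (\<forall>p\<in>P. \<exists>g\<in>G. visible P g p)"

end

theory Submission imports Defs begin
lemma inner_bound:
  fixes a w :: "real^3" assumes "a \<bullet> a = 1" shows "\<bar>a \<bullet> w\<bar> \<le> norm w"
proof -
  have "norm a = 1" using assms by (simp add: norm_eq_sqrt_inner)
  thus ?thesis using Cauchy_Schwarz_ineq2[of a w] by simp
qed

lemma generic:
  fixes a c :: "real^3" and U1 U2 V1 V2 z :: "nat \<Rightarrow> real" and P :: "(real^3) set"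
  defines "e3 \<equiv> axis 3 (1::real)"
  assumes aa: "a \<bullet> a = 1" and cc: "c \<bullet> c = 1" and ac: "a \<bullet> c = 0"
    and ae: "a \<bullet> e3 = 0" and ce: "c \<bullet> e3 = 0" and a3: "a $ 3 = 0"
    and U: "U1 1 \<le> U1 2" "U1 2 \<le> U1 3" "U1 3 < U2 3" "U2 3 = U2 2" "U2 2 \<le> U2 1"
    and V: "V1 1 \<le> V1 2" "V1 2 \<le> V1 3" "V1 3 < V2 3" "V2 3 \<le> V2 2" "V2 2 \<le> V2 1"
    and Z: "z 0 < z 1" "z 1 < z 2" "z 2 < z 3"
    and P: "P = (\<Union>t\<in>{1..3}. {q. U1 t \<le> a \<bullet> q \<and> a \<bullet> q \<le> U2 t \<and> V1 t \<le> c \<bullet> q \<and> c \<bullet> q \<le> V2 t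
                  \<and> z (t - 1) \<le> e3 \<bullet> q \<and> e3 \<bullet> q \<le> z t})"
  shows "\<exists>G. vertical_closed_face P G \<and> guards P G"
proof -
  define B where "B t = {q. U1 t \<le> a \<bullet> q \<and> a \<bullet> q \<le> U2 t \<and> V1 t \<le> c \<bullet> q \<and> c \<bullet> q \<le> V2 t
                  \<and> z (t - 1) \<le> e3 \<bullet> q \<and> e3 \<bullet> q \<le> z t}" for t
  have I3: "{1..3::nat} = {1,2,3}" by auto
  have PB: "P = B 1 \<union> B 2 \<union> B 3" unfolding P B_def I3 by auto
  have ee: "e3 \<bullet> e3 = 1" unfolding e3_def by (simp add: inner_axis_axis)
  have convB: "convex (B t)" for t
  proof -
    have "B t = {q. U1 t \<le> a \<bullet> q} \<inter> {q. a \<bullet> q \<le> U2 t} \<inter> {q. V1 t \<le> c \<bullet> q} \<inter> {q. c \<bullet> q \<le> V2 t}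
       \<inter> {q. z (t - 1) \<le> e3 \<bullet> q} \<inter> {q. e3 \<bullet> q \<le> z t}" unfolding B_def by auto
    thus ?thesis by (simp add: convex_Int convex_halfspace_ge convex_halfspace_le)
  qed
  define X where "X = U2 3"
  define m where "m = (V1 3 + V2 3) / 2"
  define pt where "pt u v w = u *\<^sub>R a + v *\<^sub>R c + w *\<^sub>R e3" for u v w
  have ca: "c \<bullet> a = 0" using ac by (simp add: inner_commute)
  have ea: "e3 \<bullet> a = 0" "e3 \<bullet> c = 0" using ae ce by (simp_all add: inner_commute)
  have pta: "a \<bullet> pt u v w = u" "c \<bullet> pt u v w = v" "e3 \<bullet> pt u v w = w" for u v w
    unfolding pt_def by (simp_all add: inner_add_right aa cc ac ae ce ca ea ee)
  define S where "S = {p. a \<bullet> p = X \<and> V1 3 < c \<bullet> p \<and> c \<bullet> p < V2 3 \<and> z 1 < e3 \<bullet> p \<and> e3 \<bullet> p < z 3}"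
  have convS: "convex S"
  proof -
    have "S = {p. a \<bullet> p = X} \<inter> {p. V1 3 < c \<bullet> p} \<inter> {p. c \<bullet> p < V2 3} \<inter> {p. z 1 < e3 \<bullet> p}
       \<inter> {p. e3 \<bullet> p < z 3}" unfolding S_def by auto
    thus ?thesis by (simp add: convex_Int convex_hyperplane convex_halfspace_gt convex_halfspace_lt)
  qed
  have g2S: "pt X m (z 2) \<in> S" unfolding S_def m_def using pta V Z by auto
  have SF: "S \<subseteq> face_points P a X"
  proof
    fix p assume pS: "p \<in> S"
    define v where "v = c \<bullet> p"
    define w where "w = e3 \<bullet> p"
    have pv: "a \<bullet> p = X" "V1 3 < v" "v < V2 3" "z 1 < w" "w < z 3"
      using pS unfolding S_def v_def w_def by auto
    define e where "e = Min {w - z 1, z 3 - w, v - V1 3, V2 3 - v, X - U1 3}"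
    have e0: "e > 0" unfolding e_def using pv U X_def by simp
    have ele: "e \<le> w - z 1" "e \<le> z 3 - w" "e \<le> v - V1 3" "e \<le> V2 3 - v" "e \<le> X - U1 3"
      unfolding e_def by simp_all
    have bnd: "\<bar>a \<bullet> q - X\<bar> < e \<and> \<bar>c \<bullet> q - v\<bar> < e \<and> \<bar>e3 \<bullet> q - w\<bar> < e" if "q \<in> ball p e" for q
    proof -
      have d: "norm (q - p) < e" using that by (simp add: dist_norm norm_minus_commute)
      have "\<bar>a \<bullet> (q - p)\<bar> \<le> norm (q - p)" "\<bar>c \<bullet> (q - p)\<bar> \<le> norm (q - p)" "\<bar>e3 \<bullet> (q - p)\<bar> \<le> norm (q - p)"
        using inner_bound aa cc ee by auto
      thus ?thesis using d pv unfolding v_def w_def by (auto simp: inner_diff_right)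
    qed
    have "ball p e \<inter> P = ball p e \<inter> {x. a \<bullet> x \<le> X}"
    proof (intro set_eqI iffI)
      fix q assume q: "q \<in> ball p e \<inter> P"
      hence b: "\<bar>a \<bullet> q - X\<bar> < e \<and> \<bar>c \<bullet> q - v\<bar> < e \<and> \<bar>e3 \<bullet> q - w\<bar> < e" using bnd[of q] q by blast
      from q have "q \<in> B 1 \<or> q \<in> B 2 \<or> q \<in> B 3" using PB by auto
      hence "a \<bullet> q \<le> X"
      proof (elim disjE)
        assume "q \<in> B 1" hence "e3 \<bullet> q \<le> z 1" unfolding B_def by simp
        thus ?thesis using b ele by linarith
      qed (auto simp: B_def X_def U)
      thus "q \<in> ball p e \<inter> {x. a \<bullet> x \<le> X}" using q by auto
    next
      fix q assume q: "q \<in> ball p e \<inter> {x. a \<bullet> x \<le> X}"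
      hence b: "\<bar>a \<bullet> q - X\<bar> < e \<and> \<bar>c \<bullet> q - v\<bar> < e \<and> \<bar>e3 \<bullet> q - w\<bar> < e" using bnd[of q] q by blast
      have aq: "a \<bullet> q \<le> X" using q by auto
      have "q \<in> B 2 \<or> q \<in> B 3"
      proof (cases "e3 \<bullet> q \<le> z 2")
        case True thus ?thesis unfolding B_def using b ele aq U V X_def by auto
      next
        case False thus ?thesis unfolding B_def using b ele aq U V X_def by auto
      qed
      thus "q \<in> ball p e \<inter> P" using q PB by auto
    qed
    thus "p \<in> face_points P a X" unfolding face_points_def using pv e0 by auto
  qed
  obtain C where C: "C \<in> components (face_points P a X)" "S \<subseteq> C"
    using exists_component_superset[OF SF _ convex_connected[OF convS]] g2S SF by blast
  define G where "G = closure C"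
  have a0: "a \<noteq> 0" using aa by auto
  have vf: "vertical_closed_face P G" unfolding vertical_closed_face_def G_def using a0 a3 C by auto
  have SG: "closure S \<subseteq> G" unfolding G_def using C closure_mono by blast
  have g1: "pt X m (z 1) \<in> closure S"
    unfolding closure_approachable
  proof (intro allI impI)
    fix \<epsilon> :: real assume "\<epsilon> > 0"
    define d where "d = min (\<epsilon> / 2) ((z 3 - z 1) / 2)"
    have d: "0 < d" "d < \<epsilon>" "d < z 3 - z 1" unfolding d_def using \<open>\<epsilon> > 0\<close> Z by (auto simp: min_def)
    have "pt X m (z 1 + d) \<in> S" unfolding S_def m_def using pta V Z d by auto
    moreover have "pt X m (z 1 + d) - pt X m (z 1) = d *\<^sub>R e3"
      unfolding pt_def by (simp add: algebra_simps)
    hence "dist (pt X m (z 1 + d)) (pt X m (z 1)) = d"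
      using d by (simp add: dist_norm e3_def norm_axis_1)
    ultimately show "\<exists>y\<in>S. dist y (pt X m (z 1)) < \<epsilon>" using d by (metis (no_types, lifting))
  qed
  have g1B: "pt X m (z 1) \<in> B 1" unfolding B_def using pta U V Z X_def m_def by auto
  have g2B: "pt X m (z 2) \<in> B 2" "pt X m (z 2) \<in> B 3" unfolding B_def using pta U V Z X_def m_def by auto
  have "guards P G" unfolding guards_def visible_def
  proof
    fix p assume "p \<in> P"
    hence "p \<in> B 1 \<or> p \<in> B 2 \<or> p \<in> B 3" using PB by auto
    thus "\<exists>g\<in>G. closed_segment g p \<subseteq> P"
    proof (elim disjE)
      assume "p \<in> B 1"
      hence "closed_segment (pt X m (z 1)) p \<subseteq> B 1" using closed_segment_subset convB g1B by blast
      thus ?thesis using g1 SG PB by blast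
    next
      assume "p \<in> B 2"
      hence "closed_segment (pt X m (z 2)) p \<subseteq> B 2" using closed_segment_subset convB g2B by blast
      thus ?thesis using g2S closure_subset SG PB by blast
    next
      assume "p \<in> B 3"
      hence "closed_segment (pt X m (z 2)) p \<subseteq> B 3" using closed_segment_subset convB g2B by blast
      thus ?thesis using g2S closure_subset SG PB by blast
    qed
  qed
  thus ?thesis using vf by blast
qed
lemma rect_sub:
  assumes "rect a b c d \<subseteq> rect A B C D" "a \<le> b" "c \<le> d"
  shows "A \<le> a \<and> b \<le> B \<and> C \<le> c \<and> d \<le> D"
proof -
  have "(a,c) \<in> rect a b c d" "(b,d) \<in> rect a b c d" using assms by (auto simp: rect_def)
  hence "(a,c) \<in> rect A B C D" "(b,d) \<in> rect A B C D" using assms(1) by blast+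
  thus ?thesis by (auto simp: rect_def)
qed

lemma frontier_rect: "frontier (rect A B C D) = rect A B C D - ({A<..<B} \<times> {C<..<D})"
  unfolding frontier_def rect_def
  by (simp add: closure_closed closed_Times interior_Times interior_atLeastAtMost_real)

lemma card_sides: assumes "a < b" "c < d" shows "card (rect_sides a b c d) = 4"
proof -
  have n1: "{a} \<times> {c..d} \<noteq> {b} \<times> {c..d}" using assms by (metis SigmaD1 SigmaI atLeastAtMost_iff less_eq_real_def singletonI singleton_iff order.irrefl)
  have n2: "{a} \<times> {c..d} \<noteq> {a..b} \<times> {c}" "{a} \<times> {c..d} \<noteq> {a..b} \<times> {d}"
    "{b} \<times> {c..d} \<noteq> {a..b} \<times> {c}" "{b} \<times> {c..d} \<noteq> {a..b} \<times> {d}"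
    "{a..b} \<times> {c} \<noteq> {a..b} \<times> {d}"
  proof -
    have "(b,c) \<in> {a..b} \<times> {c}" "(b,c) \<notin> {a} \<times> {c..d}" using assms by auto
    thus "{a} \<times> {c..d} \<noteq> {a..b} \<times> {c}" by blast
    have "(b,d) \<in> {a..b} \<times> {d}" "(b,d) \<notin> {a} \<times> {c..d}" using assms by auto
    thus "{a} \<times> {c..d} \<noteq> {a..b} \<times> {d}" by blast
    have "(a,c) \<in> {a..b} \<times> {c}" "(a,c) \<notin> {b} \<times> {c..d}" using assms by auto
    thus "{b} \<times> {c..d} \<noteq> {a..b} \<times> {c}" by blast
    have "(a,d) \<in> {a..b} \<times> {d}" "(a,d) \<notin> {b} \<times> {c..d}" using assms by auto
    thus "{b} \<times> {c..d} \<noteq> {a..b} \<times> {d}" by blast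
    have "(a,c) \<in> {a..b} \<times> {c}" "(a,c) \<notin> {a..b} \<times> {d}" using assms by auto
    thus "{a..b} \<times> {c} \<noteq> {a..b} \<times> {d}" by blast
  qed
  show ?thesis unfolding rect_sides_def using n1 n2 by simp
qed

lemma side_cases:
  assumes lt: "a < b" "c < d" and sub: "A \<le> a" "b \<le> B" "C \<le> c" "d \<le> D"
    and ty: "contact_type a b c d (rect A B C D) \<noteq> 4"
  shows "a = A \<or> b = B \<or> c = C \<or> d = D"
proof (rule ccontr)
  assume ne: "\<not> ?thesis"
  have fr: "x \<in> frontier (rect A B C D) \<longleftrightarrow> (x \<in> rect A B C D \<and> \<not> (A < fst x \<and> fst x < B \<and> C < snd x \<and> snd x < D))" for x
    by (cases x) (auto simp: frontier_rect)
  define mx where "mx = (a+b)/2"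
  define my where "my = (c+d)/2"
  have "\<not> s \<subseteq> frontier (rect A B C D)" if "s \<in> rect_sides a b c d" for s
  proof -
    from that consider "s = {a} \<times> {c..d}" | "s = {b} \<times> {c..d}" | "s = {a..b} \<times> {c}" | "s = {a..b} \<times> {d}"
      unfolding rect_sides_def by blast
    thus ?thesis
    proof cases
      case 1
      have "(a,my) \<in> s" "(a,my) \<notin> frontier (rect A B C D)" using 1 lt sub ne unfolding fr my_def by auto
      thus ?thesis by blast
    next
      case 2
      have "(b,my) \<in> s" "(b,my) \<notin> frontier (rect A B C D)" using 2 lt sub ne unfolding fr my_def by auto
      thus ?thesis by blast
    next
      case 3
      have "(mx,c) \<in> s" "(mx,c) \<notin> frontier (rect A B C D)" using 3 lt sub ne unfolding fr mx_def by auto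
      thus ?thesis by blast
    next
      case 4
      have "(mx,d) \<in> s" "(mx,d) \<notin> frontier (rect A B C D)" using 4 lt sub ne unfolding fr mx_def by auto
      thus ?thesis by blast
    qed
  qed
  hence "{s \<in> rect_sides a b c d. \<not> s \<subseteq> frontier (rect A B C D)} = rect_sides a b c d" by auto
  thus False using ty card_sides[OF lt] unfolding contact_type_def by simp
qed

theorem mainTheorem7:
  fixes x1 x2 y1 y2 z :: "nat \<Rightarrow> real"
  assumes rects: "\<forall>t\<in>{1..3}. x1 t < x2 t \<and> y1 t < y2 t"
    and heights: "z 0 < z 1" "z 1 < z 2" "z 2 < z 3"
    and c1: "canonical_contact (rect (x1 1) (x2 1) (y1 1) (y2 1))
                               (rect (x1 2) (x2 2) (y1 2) (y2 2))"
    and c2: "canonical_contact (rect (x1 2) (x2 2) (y1 2) (y2 2))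
                               (rect (x1 3) (x2 3) (y1 3) (y2 3))"
    and j: "contact_type (x1 3) (x2 3) (y1 3) (y2 3) (rect (x1 2) (x2 2) (y1 2) (y2 2)) \<noteq> 4"
  shows "\<exists>G. vertical_closed_face (orthostack 3 x1 x2 y1 y2 z) G
             \<and> guards (orthostack 3 x1 x2 y1 y2 z) G"
proof -
  have r: "x1 t < x2 t" "y1 t < y2 t" if "t \<in> {1,2,3}" for t using rects that by auto
  have s12: "x1 1 \<le> x1 2 \<and> x2 2 \<le> x2 1 \<and> y1 1 \<le> y1 2 \<and> y2 2 \<le> y2 1"
    using c1 r[of 2] unfolding canonical_contact_def by (intro rect_sub) auto
  have s23: "x1 2 \<le> x1 3 \<and> x2 3 \<le> x2 2 \<and> y1 2 \<le> y1 3 \<and> y2 3 \<le> y2 2"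
    using c2 r[of 3] unfolding canonical_contact_def by (intro rect_sub) auto
  have cs: "x1 3 = x1 2 \<or> x2 3 = x2 2 \<or> y1 3 = y1 2 \<or> y2 3 = y2 2"
    using side_cases[OF _ _ _ _ _ _ j] r[of 3] s23 by auto
  have r3: "x1 3 < x2 3" "y1 3 < y2 3" using r[of 3] by auto
  have I3: "{1..3::nat} = {1,2,3}" by auto
  define e3 :: "real^3" where "e3 = axis 3 1"
  have ip: "axis i (1::real) \<bullet> q = q $ i" for i and q :: "real^3" by (simp add: inner_axis')
  have ax: "(axis 1 1::real^3) \<bullet> axis 1 1 = 1" "(axis 2 1::real^3) \<bullet> axis 2 1 = 1"
     "(axis 1 1::real^3) \<bullet> axis 2 1 = 0" "(axis 2 1::real^3) \<bullet> axis 1 1 = 0"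
     "(axis 1 1::real^3) \<bullet> e3 = 0" "(axis 2 1::real^3) \<bullet> e3 = 0"
    by (simp_all add: inner_axis_axis e3_def)
  have ax3: "(axis 1 1::real^3) $ 3 = 0" "(axis 2 1::real^3) $ 3 = 0" by (simp_all add: axis_def)
  let ?O = "orthostack 3 x1 x2 y1 y2 z"
  have O: "?O = (\<Union>t\<in>{1..3}. {q. x1 t \<le> q$1 \<and> q$1 \<le> x2 t \<and> y1 t \<le> q$2 \<and> q$2 \<le> y2 t
                  \<and> z (t - 1) \<le> e3 \<bullet> q \<and> e3 \<bullet> q \<le> z t})"
    unfolding orthostack_def brick_def rect_def e3_def ip by auto
  from cs show ?thesis
  proof (elim disjE)
    assume h: "x1 3 = x1 2"
    show ?thesis
      by (rule generic[of "- axis 1 1" "axis 2 1" "\<lambda>t. - x2 t" "\<lambda>t. - x1 t" y1 y2 z])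
        (use ax ax3 s12 s23 r3 h heights in \<open>auto simp: O e3_def ip\<close>)
  next
    assume h: "x2 3 = x2 2"
    show ?thesis
      by (rule generic[of "axis 1 1" "axis 2 1" x1 x2 y1 y2 z])
        (use ax ax3 s12 s23 r3 h heights in \<open>auto simp: O e3_def ip\<close>)
  next
    assume h: "y1 3 = y1 2"
    show ?thesis
      by (rule generic[of "- axis 2 1" "axis 1 1" "\<lambda>t. - y2 t" "\<lambda>t. - y1 t" x1 x2 z])
        (use ax ax3 s12 s23 r3 h heights in \<open>auto simp: O e3_def ip\<close>)
  next
    assume h: "y2 3 = y2 2"
    show ?thesis
      by (rule generic[of "axis 2 1" "axis 1 1" y1 y2 x1 x2 z])
        (use ax ax3 s12 s23 r3 h heights in \<open>auto simp: O e3_def ip\<close>)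
  qed
qed

end
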